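(* Let $\mathcal{P}$ be the set of paths of a $B_k$-EPG representation of a graph $G$ and let $P_1,P_2\in\mathcal{P}$. Then $P_1$ and $P_2$ edge-intersect if and only if $P_1\cap P_2$ contains at least one edge that is a relevant edge of $P_1$ or of $P_2$.
   Context: A grid is the set of integer points of the plane; a grid edge joins two grid points at distance $1$. A path in the grid is a sequence of distinct grid edges in which consecutive edges share exactly one grid point and non-consecutive edges share none; a bend is a pair of consecutive edges with different directions (horizontal/vertical), these being called bend edges. The first and last edges of a path are its extremity edges; the relevant edges of a path are its extremity edges and bend edges. Two paths edge-intersect if they share a grid edge. An EPG representation of $G$ is a family $(P_v)_{v\in V(G)}$ of grid paths such that distinct $u,v$ are adjacent iff $P_u,P_v$ share a grid edge; it is $B_k$-EPG if every path has at most $k$ bends. *)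

theory Defs
  imports Main
begin

type_synonym gpoint = "int \<times> int"
type_synonym gedge = "gpoint set"

definition grid_edge :: "gedge \<Rightarrow> bool" where
  "grid_edge e \<longleftrightarrow> (\<exists>a b. e = {(a, b), (a + 1, b)} \<or> e = {(a, b), (a, b + 1)})"

definition horizontal :: "gedge \<Rightarrow> bool" where
  "horizontal e \<longleftrightarrow> (\<exists>a b. e = {(a, b), (a + 1, b)})"

definition grid_path :: "gedge list \<Rightarrow> bool" where
  "grid_path es \<longleftrightarrow> es \<noteq> [] \<and> distinct es \<and> (\<forall>e\<in>set es. grid_edge e) \<and>
     (\<forall>i. Suc i < length es \<longrightarrow> card (es ! i \<inter> es ! Suc i) = 1) \<and>
     (\<forall>i j. i < length es \<and> j < length es \<and> Suc i < j \<longrightarrow> es ! i \<inter> es ! j = {})"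

definition bend_at :: "gedge list \<Rightarrow> nat \<Rightarrow> bool" where
  "bend_at es i \<longleftrightarrow> Suc i < length es \<and> (horizontal (es ! i) \<noteq> horizontal (es ! Suc i))"

definition num_bends :: "gedge list \<Rightarrow> nat" where
  "num_bends es = card {i. bend_at es i}"

definition bend_edges :: "gedge list \<Rightarrow> gedge set" where
  "bend_edges es = {es ! i | i. bend_at es i} \<union> {es ! Suc i | i. bend_at es i}"

definition extremity_edges :: "gedge list \<Rightarrow> gedge set" where
  "extremity_edges es = {hd es, last es}"

definition relevant_edges :: "gedge list \<Rightarrow> gedge set" where
  "relevant_edges es = extremity_edges es \<union> bend_edges es"

definition edge_intersect :: "gedge list \<Rightarrow> gedge list \<Rightarrow> bool" where
  "edge_intersect P Q \<longleftrightarrow> set P \<inter> set Q \<noteq> {}"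

definition simple_graph :: "'v set \<Rightarrow> ('v \<Rightarrow> 'v \<Rightarrow> bool) \<Rightarrow> bool" where
  "simple_graph V E \<longleftrightarrow> (\<forall>u v. E u v \<longrightarrow> u \<in> V \<and> v \<in> V \<and> u \<noteq> v \<and> E v u)"

definition EPG_rep :: "'v set \<Rightarrow> ('v \<Rightarrow> 'v \<Rightarrow> bool) \<Rightarrow> ('v \<Rightarrow> gedge list) \<Rightarrow> bool" where
  "EPG_rep V E P \<longleftrightarrow> (\<forall>v\<in>V. grid_path (P v)) \<and>
     (\<forall>u\<in>V. \<forall>v\<in>V. u \<noteq> v \<longrightarrow> (E u v \<longleftrightarrow> edge_intersect (P u) (P v)))"

definition Bk_EPG_rep :: "nat \<Rightarrow> 'v set \<Rightarrow> ('v \<Rightarrow> 'v \<Rightarrow> bool) \<Rightarrow> ('v \<Rightarrow> gedge list) \<Rightarrow> bool" where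
  "Bk_EPG_rep k V E P \<longleftrightarrow> EPG_rep V E P \<and> (\<forall>v\<in>V. num_bends (P v) \<le> k)"

end

theory Submission
  imports Defs
begin

definition nbr :: "gedge \<Rightarrow> gedge set" where
  "nbr e = {f. grid_edge f \<and> horizontal f = horizontal e \<and> card (e \<inter> f) = 1}"

lemma card_self_edge: "grid_edge e \<Longrightarrow> card e = 2"
  unfolding grid_edge_def by auto

lemma nbr_basic: "grid_edge e \<Longrightarrow> f \<in> nbr e \<Longrightarrow> e \<inter> f \<noteq> {} \<and> f \<noteq> e"
  unfolding nbr_def using card_self_edge[of e] by (auto simp: card_eq_0_iff)

lemma nbr_two: assumes "grid_edge e" shows "\<exists>x y. nbr e \<subseteq> {x, y}"
proof -
  obtain a b where "e = {(a, b), (a + 1, b)} \<or> e = {(a, b), (a, b + 1)}"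
    using assms grid_edge_def by blast
  then show ?thesis
  proof
    assume e: "e = {(a, b), (a + 1, b)}"
    have "nbr e \<subseteq> {{(a - 1, b), (a, b)}, {(a + 1, b), (a + 2, b)}}"
    proof
      fix f assume f: "f \<in> nbr e"
      have he: "horizontal e" using e horizontal_def by blast
      have hf: "horizontal f" using f he nbr_def by auto
      then obtain c d where fd: "f = {(c, d), (c + 1, d)}" using horizontal_def by blast
      have "e \<inter> f \<noteq> {}" "f \<noteq> e" using nbr_basic[OF assms f] by auto
      then show "f \<in> {{(a - 1, b), (a, b)}, {(a + 1, b), (a + 2, b)}}"
        using e fd by (auto simp: doubleton_eq_iff)
    qed
    then show ?thesis by blast
  next
    assume e: "e = {(a, b), (a, b + 1)}"
    have nh: "\<not> horizontal e" using e unfolding horizontal_def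
      by (auto simp: doubleton_eq_iff)
    have "nbr e \<subseteq> {{(a, b - 1), (a, b)}, {(a, b + 1), (a, b + 2)}}"
    proof
      fix f assume f: "f \<in> nbr e"
      have hf: "\<not> horizontal f" using f nh nbr_def by auto
      have "grid_edge f" using f nbr_def by auto
      then obtain c d where "f = {(c, d), (c + 1, d)} \<or> f = {(c, d), (c, d + 1)}"
        using grid_edge_def by blast
      then have fd: "f = {(c, d), (c, d + 1)}" using hf horizontal_def by blast
      have "e \<inter> f \<noteq> {}" "f \<noteq> e" using nbr_basic[OF assms f] by auto
      then show "f \<in> {{(a, b - 1), (a, b)}, {(a, b + 1), (a, b + 2)}}"
        using e fd by (auto simp: doubleton_eq_iff)
    qed
    then show ?thesis by blast
  qed
qed

lemma nbr_same:
  assumes "grid_edge e" "f1 \<in> nbr e" "f2 \<in> nbr e" "f1 \<noteq> f2"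
    "g1 \<in> nbr e" "g2 \<in> nbr e" "g1 \<noteq> g2"
  shows "f2 \<in> {g1, g2}"
  using nbr_two[OF assms(1)] assms(2-) by blast

lemma inner_nbrs:
  assumes gp: "grid_path Q" and i0: "0 < i" and il: "Suc i < length Q"
    and nb1: "\<not> bend_at Q (i - 1)" and nb2: "\<not> bend_at Q i"
  shows "Q ! (i - 1) \<in> nbr (Q ! i)" "Q ! Suc i \<in> nbr (Q ! i)" "Q ! (i - 1) \<noteq> Q ! Suc i"
proof -
  have ge: "\<forall>e\<in>set Q. grid_edge e" and c: "\<forall>i. Suc i < length Q \<longrightarrow> card (Q ! i \<inter> Q ! Suc i) = 1"
    and d: "distinct Q"
    using gp grid_path_def by auto
  have si: "Suc (i - 1) = i" using i0 by simp
  have "card (Q ! (i - 1) \<inter> Q ! i) = 1" using c[rule_format, of "i - 1"] si il by simp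
  moreover have "horizontal (Q ! (i - 1)) = horizontal (Q ! i)"
    using nb1 si il unfolding bend_at_def by auto
  moreover have "grid_edge (Q ! (i - 1))" using ge il by simp
  ultimately show "Q ! (i - 1) \<in> nbr (Q ! i)" unfolding nbr_def by (simp add: Int_commute)
  have "card (Q ! i \<inter> Q ! Suc i) = 1" using c il by simp
  moreover have "horizontal (Q ! Suc i) = horizontal (Q ! i)"
    using nb2 il unfolding bend_at_def by auto
  moreover have "grid_edge (Q ! Suc i)" using ge il by simp
  ultimately show "Q ! Suc i \<in> nbr (Q ! i)" unfolding nbr_def by simp
  show "Q ! (i - 1) \<noteq> Q ! Suc i" using d il i0 by (simp add: nth_eq_iff_index_eq)
qed

lemma relevant_props:
  assumes "grid_path Q" "i < length Q" "Q ! i \<notin> relevant_edges Q"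
  shows "0 < i" "Suc i < length Q" "\<not> bend_at Q (i - 1)" "\<not> bend_at Q i"
proof -
  have ne: "Q \<noteq> []" using assms grid_path_def by auto
  show "0 < i" using assms(3) ne by (cases i) (auto simp: relevant_edges_def extremity_edges_def hd_conv_nth)
  show "Suc i < length Q"
  proof (rule ccontr)
    assume "\<not> Suc i < length Q"
    then have "i = length Q - 1" using assms(2) by simp
    then show False using assms(3) ne by (auto simp: relevant_edges_def extremity_edges_def last_conv_nth)
  qed
  show "\<not> bend_at Q (i - 1)"
  proof
    assume b: "bend_at Q (i - 1)"
    have "Suc (i - 1) = i" using \<open>0 < i\<close> by simp
    then have "Q ! i \<in> bend_edges Q" using b unfolding bend_edges_def by (metis (mono_tags, lifting) UnCI mem_Collect_eq)
    then show False using assms(3) by (simp add: relevant_edges_def)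
  qed
  show "\<not> bend_at Q i"
  proof
    assume b: "bend_at Q i"
    then have "Q ! i \<in> bend_edges Q" unfolding bend_edges_def by blast
    then show False using assms(3) by (simp add: relevant_edges_def)
  qed
qed

lemma main_lemma:
  assumes g1: "grid_path P1" and g2: "grid_path P2" and ei: "edge_intersect P1 P2"
  shows "\<exists>e \<in> set P1 \<inter> set P2. e \<in> relevant_edges P1 \<or> e \<in> relevant_edges P2"
proof (rule ccontr)
  assume H: "\<not> ?thesis"
  define S where "S = {i. i < length P1 \<and> P1 ! i \<in> set P2}"
  have fin: "finite S" unfolding S_def by simp
  have "S \<noteq> {}" using ei unfolding edge_intersect_def S_def by (auto simp: in_set_conv_nth)
  define i where "i = Max S"
  have iS: "i \<in> S" using fin \<open>S \<noteq> {}\<close> i_def by simp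
  then have il: "i < length P1" and e2: "P1 ! i \<in> set P2" unfolding S_def by auto
  obtain j where jl: "j < length P2" and ej: "P2 ! j = P1 ! i" using e2 by (auto simp: in_set_conv_nth)
  have r1: "P1 ! i \<notin> relevant_edges P1" using H il e2 by auto
  have r2: "P2 ! j \<notin> relevant_edges P2" using H il e2 ej by (metis IntI nth_mem)
  note a1 = relevant_props[OF g1 il r1] and a2 = relevant_props[OF g2 jl r2]
  note n1 = inner_nbrs[OF g1 a1] and n2 = inner_nbrs[OF g2 a2]
  have ge: "grid_edge (P1 ! i)" using g1 il grid_path_def by auto
  have "P1 ! Suc i \<in> {P2 ! (j - 1), P2 ! Suc j}"
    using nbr_same[OF ge n1(1) n1(2) n1(3)] n2 ej by simp
  then have "P1 ! Suc i \<in> set P2" using a2 by auto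
  then have "Suc i \<in> S" using a1 unfolding S_def by simp
  then have "Suc i \<le> i" using fin i_def by simp
  then show False by simp
qed

theorem lemma3p2:
  fixes V :: "'v set" and E :: "'v \<Rightarrow> 'v \<Rightarrow> bool" and P :: "'v \<Rightarrow> gedge list" and k :: nat
  assumes "simple_graph V E" and "Bk_EPG_rep k V E P"
    and "P1 \<in> P ` V" and "P2 \<in> P ` V"
  shows "edge_intersect P1 P2 \<longleftrightarrow>
           (\<exists>e \<in> set P1 \<inter> set P2. e \<in> relevant_edges P1 \<or> e \<in> relevant_edges P2)" (is "?lhs = ?rhs")
proof
  have "grid_path P1" "grid_path P2" using assms(2-4)
    unfolding Bk_EPG_rep_def EPG_rep_def by auto
  then show "edge_intersect P1 P2 \<Longrightarrow> ?rhs" using main_lemma by blast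
next
  show "?rhs \<Longrightarrow> edge_intersect P1 P2" unfolding edge_intersect_def by blast
qed

end
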